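(* Let $(M,\omega_0)$, $\chi$, $\Gamma$, $f$ be as in the context, with the Standing Assumption in force, and let $\Gamma_n=\{\lambda\in\mathbb{R}^n:\lambda_i>0\ \forall i\}$. For every $C_0>0$ and every $x\in M$ the set $$\{\lambda'\in\Gamma:\ f(\lambda')\le C_0,\ \lambda'-\lambda[\chi](x)\in\Gamma_n\}$$ is bounded, and its diameter can be bounded, uniformly in $x\in M$, in terms of $f$, $C_0$, $\chi$ and the metric $g$.
   Context: $(M,\omega_0)$ is a compact complex manifold without boundary of complex dimension $n$ with Hermitian metric $\omega_0=\sqrt{-1}g_{i\bar j}dz_i\wedge d\bar z_j$. $\chi$ is a smooth real $(1,1)$-form; $\lambda[\chi](x)$ is the unordered $n$-tuple of eigenvalues of $g^{i\bar k}\chi_{j\bar k}$ at $x$. $\Gamma\subset\mathbb{R}^n$ is a closed convex permutation-symmetric cone containing $\Gamma_n$, contained in $\{\sum\lambda_i\ge0\}$ with $\mathrm{Int}\,\Gamma\subset\{\sum\lambda_i>0\}$; $f$ smooth symmetric on $\Gamma$. Standing Assumption: (i) $\partial f/\partial\lambda_i>0$, $f$ concave, $f>0$ in $\mathrm{Int}\,\Gamma$, $f=0$ on $\partial\Gamma$; (ii) $\lambda[\chi](x)\in\mathrm{Int}\,\Gamma$ for all $x$; (iii) $f$ positively homogeneous of degree 1 with $f(\lambda)\ge c_0(\prod\lambda_i)^{1/n}$ on $\Gamma_n$, some $c_0>0$. *)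

theory Defs
  imports "HOL-Analysis.Analysis"
begin

definition hermitian_mat :: "complex^'n^'n \<Rightarrow> bool" where
  "hermitian_mat A \<longleftrightarrow> (\<forall>i j. A$i$j = cnj (A$j$i))"

definition posdef_hermitian :: "complex^'n^'n \<Rightarrow> bool" where
  "posdef_hermitian A \<longleftrightarrow> hermitian_mat A \<and>
     (\<forall>v::complex^'n. v \<noteq> 0 \<longrightarrow> 0 < Re (\<Sum>i\<in>UNIV. \<Sum>j\<in>UNIV. v$i * A$i$j * cnj (v$j)))"

text \<open>The endomorphism g^{i kbar} chi_{j kbar}: with g^{i kbar} g_{j kbar} = delta_{ij},
  the matrix (g^{i kbar})_{i,k} is the inverse of the transpose of (g_{j kbar})_{j,k}.\<close>
definition endo_mat :: "complex^'n^'n \<Rightarrow> complex^'n^'n \<Rightarrow> complex^'n^'n" where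
  "endo_mat G X = (\<chi> i j. \<Sum>k\<in>UNIV. matrix_inv (transpose G) $ i $ k * X $ j $ k)"

text \<open>The unordered n-tuple
  lambda[chi](x) is represented by all its orderings.\<close>
definition eigen_tuple :: "complex^'n^'n \<Rightarrow> real^'n \<Rightarrow> bool" where
  "eigen_tuple A \<mu> \<longleftrightarrow> (\<forall>t::complex. det (mat t - A) = (\<Prod>i\<in>UNIV. t - complex_of_real (\<mu>$i)))"

definition lam_chi :: "(complex^'n^'n) \<Rightarrow> (complex^'n^'n) \<Rightarrow> (real^'n) set" where
  "lam_chi G X = {\<mu>. eigen_tuple (endo_mat G X) \<mu>}"

definition pos_cone :: "(real^'n) set" ("\<Gamma>\<^sub>n") where
  "pos_cone = {lam. \<forall>i. 0 < lam$i}"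

definition perm_vec :: "('n \<Rightarrow> 'n) \<Rightarrow> real^'n \<Rightarrow> real^'n" where
  "perm_vec p lam = (\<chi> i. lam $ p i)"

definition admissible_cone :: "(real^'n) set \<Rightarrow> bool" where
  "admissible_cone \<Gamma> \<longleftrightarrow> closed \<Gamma> \<and> convex \<Gamma> \<and> cone \<Gamma> \<and>
     (\<forall>p lam. p permutes (UNIV::'n set) \<longrightarrow> (lam \<in> \<Gamma> \<longleftrightarrow> perm_vec p lam \<in> \<Gamma>)) \<and>
     pos_cone \<subseteq> \<Gamma> \<and>
     \<Gamma> \<subseteq> {lam. 0 \<le> (\<Sum>i\<in>UNIV. lam$i)} \<and>
     interior \<Gamma> \<subseteq> {lam. 0 < (\<Sum>i\<in>UNIV. lam$i)}"

definition standing_f :: "(real^'n) set \<Rightarrow> (real^'n \<Rightarrow> real) \<Rightarrow> bool" where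
  "standing_f \<Gamma> f \<longleftrightarrow>
     continuous_on \<Gamma> f \<and>
     (\<forall>p lam. p permutes (UNIV::'n set) \<longrightarrow> lam \<in> \<Gamma> \<longrightarrow> f (perm_vec p lam) = f lam) \<and>
     (\<forall>lam\<in>interior \<Gamma>. \<exists>f'. (f has_derivative f') (at lam) \<and>
         (\<forall>i. 0 < f' (axis i 1))) \<and>
     concave_on \<Gamma> f \<and>
     (\<forall>lam\<in>interior \<Gamma>. 0 < f lam) \<and>
     (\<forall>lam\<in>frontier \<Gamma>. f lam = 0) \<and>
     (\<forall>lam\<in>\<Gamma>. \<forall>t>0. f (t *\<^sub>R lam) = t * f lam) \<and>
     (\<exists>c0>0. \<forall>lam\<in>pos_cone. c0 * root CARD('n) (\<Prod>i\<in>UNIV. lam$i) \<le> f lam)"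

end

theory Submission
  imports Defs
begin

lemma mat_mult_entry: "((mat c :: 'a::comm_ring_1^'n^'n) ** A) $ i $ j = c * A $ i $ j"
proof -
  have "(\<lambda>k. (mat c :: 'a::comm_ring_1^'n^'n) $ i $ k * A $ k $ j) = (\<lambda>k. if i = k then c * A $ i $ j else 0)"
    by (auto simp: mat_def)
  then show ?thesis unfolding matrix_matrix_mult_def vec_lambda_beta by (simp only:) simp
qed

lemma mult_mat_entry: "(A ** (mat c :: 'a::comm_ring_1^'n^'n)) $ i $ j = c * A $ i $ j"
proof -
  have "(\<lambda>k. A $ i $ k * (mat c :: 'a::comm_ring_1^'n^'n) $ k $ j) = (\<lambda>k. if j = k then c * A $ i $ j else 0)"
    by (auto simp: mat_def)
  then show ?thesis unfolding matrix_matrix_mult_def vec_lambda_beta by (simp only:) simp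
qed

lemma mat_mult_comm: "((mat c :: 'a::comm_ring_1^'n^'n) ** A) = A ** mat c"
  by (simp add: vec_eq_iff mat_mult_entry mult_mat_entry)

lemma mat_sub_ldistrib: "(A::'a::comm_ring_1^'n^'n) ** (B - C) = A ** B - A ** C"
  by (simp add: vec_eq_iff matrix_matrix_mult_def algebra_simps sum_subtractf)

lemma det_endo:
  fixes G X :: "complex^'n^'n"
  assumes "det G \<noteq> 0"
  shows "det (mat t ** transpose G - transpose X) = det G * det (mat t - endo_mat G X)"
proof -
  let ?H = "matrix_inv (transpose G)"
  have "invertible (transpose G)" using assms by (simp add: invertible_det_nz)
  then have GH: "transpose G ** ?H = mat 1"
    unfolding invertible_def matrix_inv_def by (rule someI2_ex) auto
  have E: "endo_mat G X = ?H ** transpose X"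
    by (simp add: endo_mat_def vec_eq_iff matrix_matrix_mult_def transpose_def)
  have "transpose G ** (mat t - endo_mat G X) = transpose G ** mat t - (transpose G ** ?H) ** transpose X"
    by (simp add: E mat_sub_ldistrib matrix_mul_assoc)
  also have "\<dots> = mat t ** transpose G - transpose X"
    by (simp add: GH mat_mult_comm)
  finally show ?thesis by (metis det_mul det_transpose)
qed

lemma ker_exists:
  fixes A :: "complex^'n^'n"
  assumes "det A = 0" shows "\<exists>w. w \<noteq> 0 \<and> A *v w = 0"
  using assms invertible_det_nz[of A] invertible_left_inverse[of A] matrix_left_invertible_ker[of A]
  by blast

definition qf :: "complex^'n^'n \<Rightarrow> complex^'n \<Rightarrow> complex" where
  "qf A v = (\<Sum>i\<in>UNIV. \<Sum>j\<in>UNIV. v$i * A$i$j * cnj (v$j))"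

lemma ker_qf:
  fixes G X :: "complex^'n^'n"
  assumes "(mat c ** transpose G - transpose X) *v w = 0"
  shows "c * qf G w = qf X w"
proof -
  have h: "(\<Sum>k\<in>UNIV. (c * G$k$j - X$k$j) * w$k) = 0" for j
  proof -
    have "((mat c ** transpose G - transpose X) *v w) $ j = 0" using assms by simp
    then show ?thesis
      by (simp add: matrix_vector_mult_def mat_mult_entry transpose_def mult.commute)
  qed
  have "c * qf G w - qf X w = (\<Sum>i\<in>UNIV. \<Sum>j\<in>UNIV. w$i * (c * G$i$j - X$i$j) * cnj (w$j))"
    unfolding qf_def by (simp add: sum_distrib_left sum_subtractf[symmetric] algebra_simps)
  also have "\<dots> = (\<Sum>j\<in>UNIV. \<Sum>i\<in>UNIV. w$i * (c * G$i$j - X$i$j) * cnj (w$j))"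
    by (rule sum.swap)
  also have "\<dots> = (\<Sum>j\<in>UNIV. cnj (w$j) * (\<Sum>k\<in>UNIV. (c * G$k$j - X$k$j) * w$k))"
    by (simp add: sum_distrib_left algebra_simps)
  also have "\<dots> = 0" by (simp add: h)
  finally show ?thesis by simp
qed

lemma det_cont:
  fixes A :: "'b::topological_space \<Rightarrow> 'a::real_normed_field^'n^'n"
  assumes "continuous_on S A"
  shows "continuous_on S (\<lambda>p. det (A p))"
  unfolding det_def by (intro continuous_intros assms)

lemma qf_transpose: "qf A w = (\<Sum>j\<in>UNIV. cnj (w$j) * ((transpose A *v w)$j))"
proof -
  have "qf A w = (\<Sum>j\<in>UNIV. \<Sum>i\<in>UNIV. w$i * A$i$j * cnj (w$j))"
    unfolding qf_def by (rule sum.swap)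
  also have "\<dots> = (\<Sum>j\<in>UNIV. cnj (w$j) * ((transpose A *v w)$j))"
    by (simp add: matrix_vector_mult_def transpose_def sum_distrib_left algebra_simps)
  finally show ?thesis .
qed

lemma posdef_det:
  fixes G :: "complex^'n^'n"
  assumes "posdef_hermitian G" shows "det G \<noteq> 0"
proof
  assume "det G = 0"
  then have "det (transpose G) = 0" by simp
  then obtain w where w: "w \<noteq> 0" "transpose G *v w = 0" using ker_exists by blast
  then have "qf G w = 0" by (simp add: qf_transpose)
  moreover have "0 < Re (qf G w)" using assms w(1) unfolding posdef_hermitian_def qf_def by blast
  ultimately show False by simp
qed

lemma qf_scale: "qf A (r *\<^sub>R w) = of_real (r^2) * qf A w"
  unfolding qf_def vector_scaleR_component
  by (simp add: scaleR_conv_of_real sum_distrib_left power2_eq_square algebra_simps)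

lemma ker_scale:
  fixes A :: "complex^'n^'n"
  assumes "A *v w = 0" shows "A *v (r *\<^sub>R w) = 0"
proof -
  have "(A *v (r *\<^sub>R w)) $ j = of_real r * (A *v w) $ j" for j
    unfolding matrix_vector_mult_def vec_lambda_beta vector_scaleR_component
    by (simp add: scaleR_conv_of_real sum_distrib_left algebra_simps)
  then show ?thesis using assms by (simp add: vec_eq_iff)
qed

lemma eig_root:
  fixes G X :: "complex^'n^'n"
  assumes "det G \<noteq> 0"
    and "\<forall>t. det (mat t ** transpose G - transpose X) = det G * (\<Prod>i\<in>UNIV. t - complex_of_real (\<mu>$i))"
  shows "\<exists>w. norm w = 1 \<and> \<mu>$i * Re (qf G w) = Re (qf X w)"
proof -
  let ?t = "complex_of_real (\<mu>$i)"
  have "det (mat ?t ** transpose G - transpose X) = 0"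
    using assms(2) by (auto simp: prod_zero_iff)
  then obtain w where w: "w \<noteq> 0" "(mat ?t ** transpose G - transpose X) *v w = 0"
    using ker_exists by blast
  let ?w = "(1 / norm w) *\<^sub>R w"
  have "(mat ?t ** transpose G - transpose X) *v ?w = 0" using ker_scale[OF w(2)] .
  from ker_qf[OF this] have "?t * qf G ?w = qf X ?w" .
  then have "Re (?t * qf G ?w) = Re (qf X ?w)" by simp
  then have "\<mu>$i * Re (qf G ?w) = Re (qf X ?w)" by simp
  moreover have "norm ?w = 1" using w(1) by simp
  ultimately show ?thesis by blast
qed

lemma eigen_iff:
  fixes G X :: "complex^'n^'n"
  assumes "det G \<noteq> 0"
  shows "\<mu> \<in> lam_chi G X \<longleftrightarrow>
    (\<forall>t. det (mat t ** transpose G - transpose X) = det G * (\<Prod>i\<in>UNIV. t - complex_of_real (\<mu>$i)))"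
  using assms by (simp add: lam_chi_def eigen_tuple_def det_endo)

lemma superadd:
  fixes f :: "real^'n \<Rightarrow> real"
  assumes cv: "convex \<Gamma>" and cc: "concave_on \<Gamma> f"
    and hom: "\<forall>lam\<in>\<Gamma>. \<forall>t>0. f (t *\<^sub>R lam) = t * f lam"
    and a: "a \<in> \<Gamma>" and w: "w \<in> \<Gamma>"
  shows "f a + f w \<le> f (a + w)"
proof -
  let ?m = "(1 - 1/2) *\<^sub>R a + (1/2) *\<^sub>R w"
  have m: "?m \<in> \<Gamma>" using convexD[OF cv a w, of "1 - 1/2" "1/2"] by simp
  have "- f ?m \<le> (1 - 1/2) * (- f a) + (1/2) * (- f w)"
    using convex_onD[OF cc[unfolded concave_on_def], of "1/2" a w] a w by simp
  moreover have "a + w = (2::real) *\<^sub>R ?m" by (simp add: algebra_simps)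
  moreover have "f ((2::real) *\<^sub>R ?m) = 2 * f ?m" using hom m by simp
  ultimately show ?thesis by simp
qed

lemma core:
  fixes f :: "real^'n \<Rightarrow> real"
  assumes cv: "convex \<Gamma>" and cc: "concave_on \<Gamma> f"
    and hom: "\<forall>lam\<in>\<Gamma>. \<forall>t>0. f (t *\<^sub>R lam) = t * f lam"
    and pc: "pos_cone \<subseteq> \<Gamma>"
    and a: "a \<in> \<Gamma>" and fa: "0 \<le> f a"
    and \<delta>: "\<delta> > 0" and c0: "c0 > 0"
    and lb: "\<forall>lam\<in>pos_cone. c0 * root CARD('n) (\<Prod>i\<in>UNIV. lam$i) \<le> f lam"
    and lp: "lp \<in> \<Gamma>" "f lp \<le> C0" "lp - \<mu> \<in> pos_cone"
    and aeq: "a = \<mu> - (\<chi> i. \<delta>)"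
  shows "lp$j - \<mu>$j \<le> (C0/c0)^CARD('n) / \<delta>^(CARD('n)-1)"
proof -
  let ?n = "CARD('n)"
  define w where "w = lp - \<mu> + (\<chi> i. \<delta>)"
  have wpos: "\<delta> \<le> w$i" for i using lp(3) by (simp add: w_def pos_cone_def less_imp_le)
  then have wc: "w \<in> pos_cone" using \<delta> by (auto simp: pos_cone_def intro: less_le_trans)
  have "lp = a + w" by (simp add: aeq w_def)
  then have "f a + f w \<le> f lp" using superadd[OF cv cc hom a] wc pc by auto
  then have fw: "f w \<le> C0" using fa lp(2) by simp
  let ?P = "\<Prod>i\<in>UNIV. w$i"
  have P0: "0 \<le> ?P" using wpos \<delta> by (meson less_le_trans less_imp_le prod_nonneg)
  have "c0 * root ?n ?P \<le> C0" using lb wc fw by force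
  then have rt: "root ?n ?P \<le> C0/c0" using c0 by (simp add: field_simps mult.commute)
  have r0: "0 \<le> root ?n ?P" using P0 by simp
  have "?P = root ?n ?P ^ ?n" using P0 by simp
  also have "\<dots> \<le> (C0/c0)^?n" using power_mono[OF rt r0] .
  finally have Pb: "?P \<le> (C0/c0)^?n" .
  have "?P = w$j * (\<Prod>i\<in>UNIV-{j}. w$i)" by (simp add: prod.remove)
  moreover have "\<delta>^(?n-1) \<le> (\<Prod>i\<in>UNIV-{j}. w$i)"
  proof -
    have "(\<Prod>i\<in>UNIV-{j}. \<delta>) \<le> (\<Prod>i\<in>UNIV-{j}. w$i)"
      using wpos \<delta> by (intro prod_mono) auto
    moreover have "(\<Prod>i\<in>UNIV-{j}. \<delta>) = \<delta>^(?n-1)"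
      by (simp add: card_Diff_singleton)
    ultimately show ?thesis by simp
  qed
  ultimately have "w$j * \<delta>^(?n-1) \<le> ?P"
    using wpos[of j] \<delta> by (metis less_le_trans less_imp_le mult_left_mono)
  then have "w$j * \<delta>^(?n-1) \<le> (C0/c0)^?n" using Pb by linarith
  then have "w$j \<le> (C0/c0)^?n / \<delta>^(?n-1)" using \<delta> by (subst pos_le_divide_eq) auto
  moreover have "lp$j - \<mu>$j \<le> w$j" using \<delta> by (simp add: w_def)
  ultimately show ?thesis by linarith
qed

lemma qf_cont:
  fixes A :: "'m::topological_space \<Rightarrow> complex^'n^'n"
  assumes "continuous_on M A"
  shows "continuous_on (M \<times> T) (\<lambda>p. qf (A (fst p)) (snd p))"
proof -
  have cA: "continuous_on (M \<times> T) (\<lambda>p. A (fst p))"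
    by (rule continuous_on_compose2[OF assms continuous_on_fst]) auto
  show ?thesis unfolding qf_def
    by (intro continuous_intros cA continuous_on_component continuous_on_snd)
qed

lemma Tm_eq: "mat t ** transpose G - transpose X = (\<chi> i j. (t::'a::comm_ring_1) * G$j$i - X$j$i)"
  using mat_mult_entry[of t "transpose G"] by (simp add: vec_eq_iff transpose_def)

lemma Tm_cont:
  fixes A B :: "'m::topological_space \<Rightarrow> complex^'n^'n"
  assumes "continuous_on M A" "continuous_on M B"
  shows "continuous_on (M \<times> T) (\<lambda>p. det (mat t ** transpose (A (fst p)) - transpose (B (fst p))))"
proof -
  have cA: "continuous_on (M \<times> T) (\<lambda>p. A (fst p))"
    by (rule continuous_on_compose2[OF assms(1) continuous_on_fst]) auto
  have cB: "continuous_on (M \<times> T) (\<lambda>p. B (fst p))"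
    by (rule continuous_on_compose2[OF assms(2) continuous_on_fst]) auto
  show ?thesis unfolding Tm_eq
    by (intro det_cont continuous_intros cA cB continuous_on_component)
qed

lemma l1_bound:
  fixes y z :: "real^'n"
  assumes "\<And>j. \<bar>y$j - z$j\<bar> \<le> L"
  shows "norm (y - z) \<le> real CARD('n) * L"
proof -
  have "norm (y - z) \<le> (\<Sum>j\<in>UNIV. \<bar>(y - z)$j\<bar>)" by (rule norm_le_l1_cart)
  also have "\<dots> \<le> real CARD('n) * L"
    using sum_bounded_above[of UNIV "\<lambda>j. \<bar>(y - z)$j\<bar>" L] assms by simp
  finally show ?thesis .
qed

theorem lemma3p5:
  fixes M :: "'m::topological_space set"
    and g chi :: "'m \<Rightarrow> complex^'n^'n"
    and \<Gamma> :: "(real^'n) set"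
    and f :: "real^'n \<Rightarrow> real"
    and C0 :: real
  assumes "compact M"
    and "continuous_on M g" and "continuous_on M chi"
    and "\<forall>x\<in>M. posdef_hermitian (g x)"
    and "\<forall>x\<in>M. hermitian_mat (chi x)"
    and "admissible_cone \<Gamma>"
    and "standing_f \<Gamma> f"
    and "\<forall>x\<in>M. \<forall>\<mu>\<in>lam_chi (g x) (chi x). \<mu> \<in> interior \<Gamma>"
    and "C0 > 0"
  shows "\<exists>D. \<forall>x\<in>M. \<forall>\<mu>\<in>lam_chi (g x) (chi x).
           bounded {lp\<in>\<Gamma>. f lp \<le> C0 \<and> lp - \<mu> \<in> pos_cone} \<and>
           diameter {lp\<in>\<Gamma>. f lp \<le> C0 \<and> lp - \<mu> \<in> pos_cone} \<le> D"
proof -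
  have cv: "convex \<Gamma>" and pc: "pos_cone \<subseteq> \<Gamma>"
    using assms(6) unfolding admissible_cone_def by auto
  have cc: "concave_on \<Gamma> f" and hom: "\<forall>lam\<in>\<Gamma>. \<forall>t>0. f (t *\<^sub>R lam) = t * f lam"
    and fpos: "\<forall>lam\<in>interior \<Gamma>. 0 < f lam"
    and "\<exists>c0>0. \<forall>lam\<in>pos_cone. c0 * root CARD('n) (\<Prod>i\<in>UNIV. lam$i) \<le> f lam"
    using assms(7) unfolding standing_f_def by auto
  then obtain c0 where c0: "c0 > 0" "\<forall>lam\<in>pos_cone. c0 * root CARD('n) (\<Prod>i\<in>UNIV. lam$i) \<le> f lam"
    by blast
  have dG: "det (g x) \<noteq> 0" if "x \<in> M" for x using assms(4) posdef_det that by blast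
  have qpos: "0 < Re (qf (g x) w)" if "x \<in> M" "w \<noteq> 0" for x w
    using assms(4) that unfolding posdef_hermitian_def qf_def by blast
  let ?S = "sphere (0::complex^'n) 1"
  define F where "F p = \<bar>Re (qf (chi (fst p)) (snd p))\<bar> / Re (qf (g (fst p)) (snd p))" for p
  have Fc: "continuous_on (M \<times> ?S) F"
    unfolding F_def
  proof (intro continuous_intros qf_cont assms(2,3))
    show "\<forall>p\<in>M \<times> ?S. Re (qf (g (fst p)) (snd p)) \<noteq> 0"
    proof
      fix p assume p: "p \<in> M \<times> ?S"
      then have "fst p \<in> M" "snd p \<noteq> 0" by (auto simp: mem_Times_iff)
      from qpos[OF this] show "Re (qf (g (fst p)) (snd p)) \<noteq> 0" by simp
    qed
  qed
  have "compact (F ` (M \<times> ?S))"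
    by (intro compact_continuous_image Fc compact_Times assms(1) compact_sphere)
  then obtain R where R: "\<forall>y\<in>F ` (M \<times> ?S). \<bar>y\<bar> \<le> R"
    using compact_imp_bounded bounded_real by metis
  have mub: "\<bar>\<mu>$i\<bar> \<le> R" if "x \<in> M" "\<mu> \<in> lam_chi (g x) (chi x)" for x \<mu> i
  proof -
    have "\<forall>t. det (mat t ** transpose (g x) - transpose (chi x)) = det (g x) * (\<Prod>i\<in>UNIV. t - complex_of_real (\<mu>$i))"
      using eigen_iff[OF dG[OF that(1)]] that(2) by blast
    from eig_root[OF dG[OF that(1)] this]
    obtain w where w: "norm w = 1" "\<mu>$i * Re (qf (g x) w) = Re (qf (chi x) w)" by blast
    have "w \<noteq> 0" using w(1) by auto
    then have qp: "0 < Re (qf (g x) w)" using qpos that(1) by blast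
    have "\<bar>\<mu>$i\<bar> = F (x,w)" unfolding F_def using w(2)[symmetric] qp by (simp add: abs_mult)
    moreover have "(x,w) \<in> M \<times> ?S" using that(1) w(1) by simp
    ultimately show ?thesis using R by force
  qed
  define R' where "R' = real CARD('n) * R"
  have normb: "norm \<mu> \<le> R'" if "x \<in> M" "\<mu> \<in> lam_chi (g x) (chi x)" for x \<mu>
  proof -
    have "norm (\<mu> - 0) \<le> R'" unfolding R'_def by (rule l1_bound) (use mub[OF that] in simp)
    then show ?thesis by simp
  qed
  define h where "h t p = det (mat t ** transpose (g (fst p)) - transpose (chi (fst p))) -
      det (g (fst p)) * (\<Prod>i\<in>UNIV. t - complex_of_real ((snd p :: real^'n) $ i))" for t p
  let ?P = "M \<times> cball (0::real^'n) R'"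
  define Gr where "Gr = \<Inter> (range (\<lambda>t. {p \<in> ?P. h t p = 0}))"
  have cgf: "continuous_on ?P (\<lambda>p. g (fst p))"
    by (rule continuous_on_compose2[OF assms(2) continuous_on_fst]) auto
  have "closedin (top_of_set ?P) Gr" unfolding Gr_def
  proof (rule closedin_Inter)
    show "range (\<lambda>t. {p \<in> ?P. h t p = 0}) \<noteq> {}" by simp
    fix X assume "X \<in> range (\<lambda>t. {p \<in> ?P. h t p = 0})"
    then obtain t where X: "X = {p \<in> ?P. h t p = 0}" by blast
    have "continuous_on ?P (h t)" unfolding h_def
      by (intro continuous_intros Tm_cont det_cont assms(2,3) cgf continuous_on_component continuous_on_snd)
    then show "closedin (top_of_set ?P) X" unfolding X by (rule continuous_closedin_preimage_constant)
  qed
  then have cG: "compact Gr"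
    by (rule closedin_compact[rotated]) (intro compact_Times assms(1) compact_cball)
  define K where "K = snd ` Gr"
  have cK: "compact K" unfolding K_def by (intro compact_continuous_image continuous_on_snd cG continuous_on_id)
  have Gr_iff: "(x, \<mu>) \<in> Gr \<longleftrightarrow> x \<in> M \<and> norm \<mu> \<le> R' \<and> \<mu> \<in> lam_chi (g x) (chi x)" for x \<mu>
  proof (cases "x \<in> M")
    case True
    have "(x, \<mu>) \<in> Gr \<longleftrightarrow> (x, \<mu>) \<in> ?P \<and> (\<forall>t. h t (x, \<mu>) = 0)" unfolding Gr_def by auto
    then show ?thesis using eigen_iff[OF dG[OF True], of \<mu> "chi x"] True unfolding h_def by auto
  next
    case False
    then show ?thesis unfolding Gr_def by auto
  qed
  have KE: "\<mu> \<in> K" if "x \<in> M" "\<mu> \<in> lam_chi (g x) (chi x)" for x \<mu>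
  proof -
    have "(x, \<mu>) \<in> Gr" using Gr_iff normb[OF that] that by blast
    then show ?thesis unfolding K_def by force
  qed
  have KI: "K \<subseteq> interior \<Gamma>"
  proof
    fix \<mu> assume "\<mu> \<in> K"
    then obtain x where "(x, \<mu>) \<in> Gr" unfolding K_def by force
    then show "\<mu> \<in> interior \<Gamma>" using Gr_iff assms(8) by blast
  qed
  obtain \<epsilon> where \<epsilon>: "\<epsilon> > 0" "(\<Union>\<mu>\<in>K. ball \<mu> \<epsilon>) \<subseteq> interior \<Gamma>"
    using compact_subset_open_imp_ball_epsilon_subset[OF cK open_interior KI] by blast
  define \<delta> where "\<delta> = \<epsilon> / (2 * real CARD('n))"
  have \<delta>: "\<delta> > 0" using \<epsilon> by (simp add: \<delta>_def)
  define L where "L = (C0/c0)^CARD('n) / \<delta>^(CARD('n)-1)"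
  have L0: "0 \<le> L" using \<delta> c0 assms(9) by (simp add: L_def)
  show ?thesis
  proof (intro exI[of _ "real CARD('n) * L"] ballI conjI)
    fix x \<mu> assume x: "x \<in> M" and \<mu>: "\<mu> \<in> lam_chi (g x) (chi x)"
    let ?T = "{lp\<in>\<Gamma>. f lp \<le> C0 \<and> lp - \<mu> \<in> pos_cone}"
    define a where "a = \<mu> - (\<chi> i. \<delta>)"
    have "norm (\<mu> - a) \<le> real CARD('n) * \<delta>"
      by (rule l1_bound) (use \<delta> in \<open>simp add: a_def\<close>)
    also have "\<dots> < \<epsilon>" using \<epsilon> by (simp add: \<delta>_def)
    finally have "a \<in> ball \<mu> \<epsilon>" by (simp add: dist_norm)
    then have aI: "a \<in> interior \<Gamma>" using \<epsilon>(2) KE[OF x \<mu>] by blast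
    have aG: "a \<in> \<Gamma>" using aI interior_subset by blast
    have fa: "0 \<le> f a" using fpos aI by (simp add: less_imp_le)
    have box: "0 < lp$j - \<mu>$j \<and> lp$j - \<mu>$j \<le> L" if "lp \<in> ?T" for lp j
    proof
      show "0 < lp$j - \<mu>$j" using that by (simp add: pos_cone_def)
      show "lp$j - \<mu>$j \<le> L" unfolding L_def
        using core[OF cv cc hom pc aG fa \<delta> c0(1) c0(2), of lp C0 \<mu> j] that a_def by blast
    qed
    have "norm (\<mu> - lp) \<le> real CARD('n) * L" if "lp \<in> ?T" for lp
    proof (rule l1_bound)
      fix j show "\<bar>\<mu>$j - lp$j\<bar> \<le> L" using box[OF that, of j] L0 by (auto simp: abs_le_iff)
    qed
    then have "?T \<subseteq> cball \<mu> (real CARD('n) * L)" by (auto simp: dist_norm)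
    then show "bounded ?T" using bounded_cball bounded_subset by blast
    show "diameter ?T \<le> real CARD('n) * L"
    proof (rule diameter_le)
      show "?T \<noteq> {} \<or> 0 \<le> real CARD('n) * L" using L0 by simp
      fix y z assume "y \<in> ?T" "z \<in> ?T"
      show "norm (y - z) \<le> real CARD('n) * L"
      proof (rule l1_bound)
        fix j show "\<bar>y$j - z$j\<bar> \<le> L"
          using box[OF \<open>y \<in> ?T\<close>, of j] box[OF \<open>z \<in> ?T\<close>, of j] by (auto simp: abs_le_iff)
      qed
    qed
  qed
qed

end
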